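(* Let $R$ be an ordered ring with unit. Fix either a finite size $n$ or the infinite index set $\{1,2,3,\dots\}$. The set of all upper triangular matrices (of that size) with entries in $R$ whose diagonal entries are all positive and invertible in $R$ forms a group under matrix multiplication, and this group is orderable, i.e. it admits a relation $>$ such that for all $X,Y,Z$ exactly one of $X>Y$, $Y>X$, $X=Y$ holds, $>$ is transitive, and $X>Y$ implies $AXB>AYB$ for all $A,B$ in the group.
   Context: An ordered ring is a ring $R$ with a relation $>$ such that the additive group is totally ordered by $>$ with $x>y \Rightarrow a+x+b>a+y+b$, and such that $a>0$ and $x>y$ imply $ax>ay$ and $xa>ya$. An upper triangular (possibly infinite) matrix is one with all entries below the main diagonal equal to $0$; for infinite matrices indexed by positive integers, products are defined entrywise by the (finite) sums $\sum_{i\le j\le k} x_{ij}y_{jk}$. *)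

theory Defs
  imports "HOL-Algebra.Group"
begin

text \<open>Ordered ring with unit: type class linordered_ring_strict (totally ordered additive
group, translation invariant, strict multiplication monotonicity on both sides) plus ring_1.
Matrices are functions nat => nat => 'a, indexed by a set I of indices, which is either
{1..n} (finite size n) or {1..} (the positive integers); entries outside I x I are 0.\<close>

definition ut_mats :: "nat set \<Rightarrow> (nat \<Rightarrow> nat \<Rightarrow> 'a::{linordered_ring_strict,ring_1}) set" where
  "ut_mats I = {X. (\<forall>i j. (i \<notin> I \<or> j \<notin> I) \<longrightarrow> X i j = 0)
                 \<and> (\<forall>i\<in>I. \<forall>j\<in>I. j < i \<longrightarrow> X i j = 0)
                 \<and> (\<forall>i\<in>I. 0 < X i i \<and> (\<exists>u. u * X i i = 1 \<and> X i i * u = 1))}"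

definition mat_mult :: "nat set \<Rightarrow> (nat \<Rightarrow> nat \<Rightarrow> 'a::{linordered_ring_strict,ring_1})
    \<Rightarrow> (nat \<Rightarrow> nat \<Rightarrow> 'a) \<Rightarrow> (nat \<Rightarrow> nat \<Rightarrow> 'a)" where
  "mat_mult I X Y = (\<lambda>i k. if i \<in> I \<and> k \<in> I
      then (\<Sum>j\<in>{j\<in>I. i \<le> j \<and> j \<le> k}. X i j * Y j k) else 0)"

definition mat_one :: "nat set \<Rightarrow> (nat \<Rightarrow> nat \<Rightarrow> 'a::{linordered_ring_strict,ring_1})" where
  "mat_one I = (\<lambda>i j. if i \<in> I \<and> j \<in> I \<and> i = j then 1 else 0)"

definition ut_group :: "nat set \<Rightarrow> (nat \<Rightarrow> nat \<Rightarrow> 'a::{linordered_ring_strict,ring_1}) monoid" where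
  "ut_group I = \<lparr>carrier = ut_mats I, mult = mat_mult I, one = mat_one I\<rparr>"

definition orderable_group :: "('g, 'b) monoid_scheme \<Rightarrow> bool" where
  "orderable_group G \<longleftrightarrow> (\<exists>gt :: 'g \<Rightarrow> 'g \<Rightarrow> bool.
     (\<forall>X\<in>carrier G. \<forall>Y\<in>carrier G.
        (gt X Y \<or> gt Y X \<or> X = Y) \<and> \<not> (gt X Y \<and> gt Y X)
        \<and> \<not> (gt X Y \<and> X = Y) \<and> \<not> (gt Y X \<and> X = Y))
   \<and> (\<forall>X\<in>carrier G. \<forall>Y\<in>carrier G. \<forall>Z\<in>carrier G. gt X Y \<and> gt Y Z \<longrightarrow> gt X Z)
   \<and> (\<forall>A\<in>carrier G. \<forall>B\<in>carrier G. \<forall>X\<in>carrier G. \<forall>Y\<in>carrier G.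
        gt X Y \<longrightarrow> gt (A \<otimes>\<^bsub>G\<^esub> X \<otimes>\<^bsub>G\<^esub> B) (A \<otimes>\<^bsub>G\<^esub> Y \<otimes>\<^bsub>G\<^esub> B)))"

end

theory Submission
  imports Defs
begin

type_synonym 'a mat = "nat \<Rightarrow> nat \<Rightarrow> 'a"

lemma utD1: "X \<in> ut_mats I \<Longrightarrow> i \<notin> I \<or> j \<notin> I \<Longrightarrow> X i j = 0"
  by (auto simp: ut_mats_def)

lemma utL: "X \<in> ut_mats I \<Longrightarrow> j < i \<Longrightarrow> X i j = 0"
  by (cases "i \<in> I \<and> j \<in> I") (auto simp: ut_mats_def)

lemma utpos: "X \<in> ut_mats I \<Longrightarrow> i \<in> I \<Longrightarrow> 0 < X i i"
  by (auto simp: ut_mats_def)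

lemma utunit: "X \<in> ut_mats I \<Longrightarrow> i \<in> I \<Longrightarrow> \<exists>u. u * X i i = 1 \<and> X i i * u = 1"
  by (auto simp: ut_mats_def)

lemma utNZ: "X \<in> ut_mats I \<Longrightarrow> X i j \<noteq> 0 \<Longrightarrow> i \<in> I \<and> j \<in> I \<and> i \<le> j"
  by (metis not_le utD1 utL)

lemma one_pos: "(0::'a::{linordered_ring_strict,ring_1}) < 1"
proof -
  have "(0::'a) \<le> 1 * 1" by (rule zero_le_square)
  then show ?thesis by (simp add: order_le_neq_trans)
qed

lemma mm_eq:
  fixes X Y :: "'a::{linordered_ring_strict,ring_1} mat"
  assumes X: "X \<in> ut_mats I" and Y: "Y \<in> ut_mats I"
  shows "mat_mult I X Y = (\<lambda>i k. \<Sum>j\<le>k. X i j * Y j k)"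
proof (intro ext)
  fix i k
  show "mat_mult I X Y i k = (\<Sum>j\<le>k. X i j * Y j k)"
  proof (cases "i \<in> I \<and> k \<in> I")
    case True
    have "(\<Sum>j\<in>{j\<in>I. i \<le> j \<and> j \<le> k}. X i j * Y j k) = (\<Sum>j\<le>k. X i j * Y j k)"
    proof (rule sum.mono_neutral_left)
      show "\<forall>j\<in>{..k} - {j \<in> I. i \<le> j \<and> j \<le> k}. X i j * Y j k = 0"
        using X utNZ[OF X, of i] by force
    qed auto
    then show ?thesis using True by (simp add: mat_mult_def)
  next
    case False
    then have "\<forall>j. X i j * Y j k = 0" using X Y utD1 by (metis mult_zero_left mult_zero_right)
    then have "(\<Sum>j\<le>k. X i j * Y j k) = 0" by (intro sum.neutral) blast
    then show ?thesis using False unfolding mat_mult_def by auto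
  qed
qed

lemma mm_closed:
  fixes X Y :: "'a::{linordered_ring_strict,ring_1} mat"
  assumes X: "X \<in> ut_mats I" and Y: "Y \<in> ut_mats I"
  shows "mat_mult I X Y \<in> ut_mats I"
proof -
  have diag: "mat_mult I X Y i i = X i i * Y i i" if "i \<in> I" for i
  proof -
    have "{j\<in>I. i \<le> j \<and> j \<le> i} = {i}" using that by auto
    then show ?thesis using that by (simp add: mat_mult_def)
  qed
  show ?thesis unfolding ut_mats_def
  proof (intro CollectI conjI ballI allI impI)
    fix i j assume "i \<notin> I \<or> j \<notin> I"
    then show "mat_mult I X Y i j = 0" by (auto simp: mat_mult_def)
  next
    fix i j assume "i \<in> I" "j \<in> I" "j < i"
    then have e: "{l\<in>I. i \<le> l \<and> l \<le> j} = {}" by auto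
    show "mat_mult I X Y i j = 0" unfolding mat_mult_def e by simp
  next
    fix i assume i: "i \<in> I"
    show "0 < mat_mult I X Y i i" using diag[OF i] utpos[OF X i] utpos[OF Y i]
      by (simp add: mult_pos_pos)
    obtain u where u: "u * X i i = 1" "X i i * u = 1" using utunit[OF X i] by blast
    obtain v where v: "v * Y i i = 1" "Y i i * v = 1" using utunit[OF Y i] by blast
    have "(v * u) * (X i i * Y i i) = 1"
      by (metis mult.assoc mult_1_left u(1) v(1))
    moreover have "(X i i * Y i i) * (v * u) = 1"
      by (metis mult.assoc mult_1_left u(2) v(2))
    ultimately show "\<exists>w. w * mat_mult I X Y i i = 1 \<and> mat_mult I X Y i i * w = 1"
      using diag[OF i] by metis
  qed
qed

lemma one_closed: "(mat_one I :: 'a::{linordered_ring_strict,ring_1} mat) \<in> ut_mats I"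
  by (auto simp: ut_mats_def mat_one_def one_pos)

lemma one_mult:
  fixes X :: "'a::{linordered_ring_strict,ring_1} mat"
  assumes X: "X \<in> ut_mats I"
  shows "mat_mult I (mat_one I) X = X"
proof -
  have "(\<Sum>j\<le>k. mat_one I i j * X j k) = X i k" for i k
  proof -
    have "(\<Sum>j\<le>k. mat_one I i j * X j k) = (\<Sum>j\<le>k. if j = i then (if i \<in> I then X i k else 0) else 0)"
      by (rule sum.cong) (auto simp: mat_one_def)
    also have "\<dots> = X i k"
      using X by (auto simp: utD1 utL not_le)
    finally show ?thesis .
  qed
  then show ?thesis by (simp add: mm_eq[OF one_closed X])
qed

lemma mm_assoc:
  fixes X Y Z :: "'a::{linordered_ring_strict,ring_1} mat"
  assumes X: "X \<in> ut_mats I" and Y: "Y \<in> ut_mats I" and Z: "Z \<in> ut_mats I"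
  shows "mat_mult I (mat_mult I X Y) Z = mat_mult I X (mat_mult I Y Z)"
proof -
  have "(\<Sum>j\<le>m. (\<Sum>l\<le>j. X i l * Y l j) * Z j m) = (\<Sum>l\<le>m. X i l * (\<Sum>j\<le>m. Y l j * Z j m))"
    for i m
  proof -
    have inner: "(\<Sum>l\<le>j. X i l * Y l j) = (\<Sum>l\<le>m. X i l * Y l j)" if "j \<le> m" for j
      by (rule sum.mono_neutral_left) (use that Y in \<open>auto simp: utL\<close>)
    have "(\<Sum>j\<le>m. (\<Sum>l\<le>j. X i l * Y l j) * Z j m) = (\<Sum>j\<le>m. \<Sum>l\<le>m. X i l * Y l j * Z j m)"
      by (rule sum.cong) (auto simp: inner sum_distrib_right)
    also have "\<dots> = (\<Sum>l\<le>m. \<Sum>j\<le>m. X i l * Y l j * Z j m)" by (rule sum.swap)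
    also have "\<dots> = (\<Sum>l\<le>m. X i l * (\<Sum>j\<le>m. Y l j * Z j m))"
      by (simp add: sum_distrib_left mult.assoc)
    finally show ?thesis .
  qed
  then show ?thesis
    unfolding mm_eq[OF mm_closed[OF X Y] Z] mm_eq[OF X mm_closed[OF Y Z]]
    unfolding mm_eq[OF X Y] mm_eq[OF Y Z] by simp
qed

definition uinv :: "'a::ring_1 \<Rightarrow> 'a" where
  "uinv x = (SOME u. u * x = 1 \<and> x * u = 1)"

lemma uinv:
  assumes "\<exists>u. u * x = 1 \<and> x * u = 1"
  shows "uinv x * x = 1" "x * uinv x = 1"
  using someI_ex[OF assms] unfolding uinv_def by auto

lemma uinv_pos:
  fixes x :: "'a::{linordered_ring_strict,ring_1}"
  assumes "0 < x" "\<exists>u. u * x = 1 \<and> x * u = 1"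
  shows "0 < uinv x"
proof (rule ccontr)
  assume "\<not> 0 < uinv x"
  then have "uinv x \<le> 0" by simp
  then have "uinv x * x \<le> 0" using assms(1) by (simp add: mult_nonpos_nonneg)
  then show False using uinv(1)[OF assms(2)] one_pos[where 'a='a] by simp
qed

function invr :: "('a::{linordered_ring_strict,ring_1}) mat \<Rightarrow> nat \<Rightarrow> nat \<Rightarrow> 'a" where
  "invr X i k = (if k \<le> i then uinv (X i i)
     else - (\<Sum>j\<in>{i..<k}. invr X i j * X j k) * uinv (X k k))"
  by pat_completeness auto
termination by (relation "measure (\<lambda>(X,i,k). k)") auto

declare invr.simps[simp del]

definition invm :: "nat set \<Rightarrow> ('a::{linordered_ring_strict,ring_1}) mat \<Rightarrow> 'a mat" where
  "invm I X = (\<lambda>i k. if i \<in> I \<and> k \<in> I \<and> i \<le> k then invr X i k else 0)"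

lemma invm_closed:
  fixes X :: "'a::{linordered_ring_strict,ring_1} mat"
  assumes X: "X \<in> ut_mats I"
  shows "invm I X \<in> ut_mats I"
proof -
  have d: "invm I X i i = uinv (X i i)" if "i \<in> I" for i
    using that by (simp add: invm_def invr.simps)
  show ?thesis unfolding ut_mats_def
  proof (intro CollectI conjI ballI allI impI)
    fix i assume i: "i \<in> I"
    show "0 < invm I X i i" using d[OF i] uinv_pos[OF utpos[OF X i] utunit[OF X i]] by simp
    show "\<exists>w. w * invm I X i i = 1 \<and> invm I X i i * w = 1"
      using d[OF i] uinv[OF utunit[OF X i]] by metis
  qed (auto simp: invm_def)
qed

lemma invm_inv:
  fixes X :: "'a::{linordered_ring_strict,ring_1} mat"
  assumes X: "X \<in> ut_mats I"
  shows "mat_mult I (invm I X) X = mat_one I"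
proof (intro ext)
  fix i k
  let ?Y = "invm I X"
  have Y: "?Y \<in> ut_mats I" by (rule invm_closed[OF X])
  show "mat_mult I ?Y X i k = mat_one I i k"
  proof (cases "i \<in> I \<and> k \<in> I \<and> i \<le> k")
    case False
    then have "\<forall>j. ?Y i j * X j k = 0"
      by (metis X Y le_trans mult_zero_left mult_zero_right utNZ)
    then have "(\<Sum>j\<le>k. ?Y i j * X j k) = 0" by (intro sum.neutral) blast
    then show ?thesis using False by (auto simp: mm_eq[OF Y X] mat_one_def)
  next
    case True
    show ?thesis
    proof (cases "i = k")
      case True
      have "(\<Sum>j\<le>k. ?Y i j * X j k) = (\<Sum>j<k. ?Y i j * X j k) + ?Y i k * X k k"
        by (simp add: lessThan_Suc_atMost[symmetric])
      moreover have "(\<Sum>j<k. ?Y i j * X j k) = 0"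
        using True by (intro sum.neutral) (auto simp: invm_def)
      ultimately have "(\<Sum>j\<le>k. ?Y i j * X j k) = ?Y i i * X i k" using True by simp
      moreover have "?Y i i = uinv (X i i)" using \<open>i \<in> I \<and> k \<in> I \<and> i \<le> k\<close>
        by (simp add: invm_def invr.simps)
      ultimately show ?thesis using True \<open>i \<in> I \<and> k \<in> I \<and> i \<le> k\<close> uinv[OF utunit[OF X]]
        by (simp add: mm_eq[OF Y X] mat_one_def)
    next
      case False
      with True have ik: "i < k" "i \<in> I" "k \<in> I" by auto
      let ?S = "(\<Sum>j\<in>{i..<k}. invr X i j * X j k)"
      have Yik: "?Y i k = - ?S * uinv (X k k)"
        using ik by (simp add: invm_def invr.simps[of X i k])
      have "(\<Sum>j\<le>k. ?Y i j * X j k) = (\<Sum>j<k. ?Y i j * X j k) + ?Y i k * X k k"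
        by (simp add: lessThan_Suc_atMost[symmetric])
      also have "(\<Sum>j<k. ?Y i j * X j k) = ?S"
      proof (rule sum.mono_neutral_cong_right)
        show "\<forall>j\<in>{..<k} - {i..<k}. ?Y i j * X j k = 0" by (auto simp: invm_def)
        show "\<And>j. j \<in> {i..<k} \<Longrightarrow> ?Y i j * X j k = invr X i j * X j k"
          using ik X by (auto simp: invm_def utD1)
      qed auto
      also have "?Y i k * X k k = - ?S"
        using Yik uinv(1)[OF utunit[OF X ik(3)]] by (simp add: mult.assoc)
      finally have "(\<Sum>j\<le>k. ?Y i j * X j k) = 0" by simp
      then show ?thesis using ik by (simp add: mm_eq[OF Y X] mat_one_def)
    qed
  qed
qed


definition agb :: "nat set \<Rightarrow> ('a::{linordered_ring_strict,ring_1}) mat \<Rightarrow> 'a mat \<Rightarrow> nat \<Rightarrow> nat \<Rightarrow> bool" where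
  "agb I X Y i d = (\<forall>a b. a \<in> I \<longrightarrow> b \<in> I \<longrightarrow> a \<le> b \<longrightarrow> (b - a < d \<or> (b - a = d \<and> a < i))
      \<longrightarrow> X a b = Y a b)"

definition gtm :: "nat set \<Rightarrow> ('a::{linordered_ring_strict,ring_1}) mat \<Rightarrow> 'a mat \<Rightarrow> bool" where
  "gtm I X Y = (\<exists>i j. i \<in> I \<and> j \<in> I \<and> i \<le> j \<and> Y i j < X i j \<and> agb I X Y i (j - i))"

lemma agbD: "agb I X Y i d \<Longrightarrow> a \<in> I \<Longrightarrow> b \<in> I \<Longrightarrow> a \<le> b \<Longrightarrow> (b - a < d \<or> (b - a = d \<and> a < i))
   \<Longrightarrow> X a b = Y a b"
  unfolding agb_def by blast

lemma left_mult:
  fixes A X Y :: "'a::{linordered_ring_strict,ring_1} mat"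
  assumes A: "A \<in> ut_mats I" and X: "X \<in> ut_mats I" and Y: "Y \<in> ut_mats I"
    and ag: "agb I X Y i (j - i)" and ij: "i \<in> I" "j \<in> I" "i \<le> j"
  shows "agb I (mat_mult I A X) (mat_mult I A Y) i (j - i)"
    and "mat_mult I A X i j - mat_mult I A Y i j = A i i * (X i j - Y i j)"
proof -
  show "agb I (mat_mult I A X) (mat_mult I A Y) i (j - i)"
    unfolding agb_def
  proof (intro allI impI)
    fix a b assume ab: "a \<in> I" "b \<in> I" "a \<le> b" "b - a < j - i \<or> b - a = j - i \<and> a < i"
    have "(\<Sum>l\<le>b. A a l * X l b) = (\<Sum>l\<le>b. A a l * Y l b)"
    proof (rule sum.cong)
      fix l assume l: "l \<in> {..b}"
      show "A a l * X l b = A a l * Y l b"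
      proof (cases "A a l = 0")
        case False
        then have "l \<in> I" "a \<le> l" using utNZ[OF A] by auto
        then have "X l b = Y l b"
          using l ab by (intro agbD[OF ag]) auto
        then show ?thesis by simp
      qed simp
    qed simp
    then show "mat_mult I A X a b = mat_mult I A Y a b" by (simp add: mm_eq[OF A X] mm_eq[OF A Y])
  qed
  have "mat_mult I A X i j - mat_mult I A Y i j = (\<Sum>l\<le>j. A i l * (X l j - Y l j))"
    by (simp add: mm_eq[OF A X] mm_eq[OF A Y] sum_subtractf right_diff_distrib)
  also have "\<dots> = (\<Sum>l\<le>j. if l = i then A i i * (X i j - Y i j) else 0)"
  proof (rule sum.cong)
    fix l assume l: "l \<in> {..j}"
    show "A i l * (X l j - Y l j) = (if l = i then A i i * (X i j - Y i j) else 0)"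
    proof (cases "A i l = 0 \<or> l = i")
      case False
      then have "l \<in> I" "i < l" using utNZ[OF A, of i l] by auto
      then have "X l j = Y l j"
        using l ij by (intro agbD[OF ag]) auto
      then show ?thesis using False by simp
    qed auto
  qed simp
  also have "\<dots> = A i i * (X i j - Y i j)" using ij by simp
  finally show "mat_mult I A X i j - mat_mult I A Y i j = A i i * (X i j - Y i j)" .
qed

lemma right_mult:
  fixes B X Y :: "'a::{linordered_ring_strict,ring_1} mat"
  assumes B: "B \<in> ut_mats I" and X: "X \<in> ut_mats I" and Y: "Y \<in> ut_mats I"
    and ag: "agb I X Y i (j - i)" and ij: "i \<in> I" "j \<in> I" "i \<le> j"
  shows "agb I (mat_mult I X B) (mat_mult I Y B) i (j - i)"
    and "mat_mult I X B i j - mat_mult I Y B i j = (X i j - Y i j) * B j j"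
proof -
  show "agb I (mat_mult I X B) (mat_mult I Y B) i (j - i)"
    unfolding agb_def
  proof (intro allI impI)
    fix a b assume ab: "a \<in> I" "b \<in> I" "a \<le> b" "b - a < j - i \<or> b - a = j - i \<and> a < i"
    have "(\<Sum>l\<le>b. X a l * B l b) = (\<Sum>l\<le>b. Y a l * B l b)"
    proof (rule sum.cong)
      fix l assume l: "l \<in> {..b}"
      show "X a l * B l b = Y a l * B l b"
      proof (cases "B l b = 0")
        case False
        then have lI: "l \<in> I" using utNZ[OF B] by auto
        show ?thesis
        proof (cases "l < a")
          case True
          then show ?thesis using utL[OF X True] utL[OF Y True] by simp
        next
          case False
          then have "X a l = Y a l"
            using l ab lI by (intro agbD[OF ag]) auto
          then show ?thesis by simp
        qed
      qed simp
    qed simp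
    then show "mat_mult I X B a b = mat_mult I Y B a b" by (simp add: mm_eq[OF X B] mm_eq[OF Y B])
  qed
  have "mat_mult I X B i j - mat_mult I Y B i j = (\<Sum>l\<le>j. (X i l - Y i l) * B l j)"
    by (simp add: mm_eq[OF X B] mm_eq[OF Y B] sum_subtractf left_diff_distrib)
  also have "\<dots> = (\<Sum>l\<le>j. if l = j then (X i j - Y i j) * B j j else 0)"
  proof (rule sum.cong)
    fix l assume l: "l \<in> {..j}"
    show "(X i l - Y i l) * B l j = (if l = j then (X i j - Y i j) * B j j else 0)"
    proof (cases "l = j")
      case False
      show ?thesis
      proof (cases "l < i")
        case True
        then show ?thesis using utL[OF X True] utL[OF Y True] False by simp
      next
        case nl: False
        show ?thesis
        proof (cases "B l j = 0")
          case False
          then have "l \<in> I" using utNZ[OF B] by auto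
          then have "X i l = Y i l"
            using l ij nl \<open>l \<noteq> j\<close> by (intro agbD[OF ag]) auto
          then show ?thesis using \<open>l \<noteq> j\<close> by simp
        qed (use \<open>l \<noteq> j\<close> in simp)
      qed
    qed simp
  qed simp
  also have "\<dots> = (X i j - Y i j) * B j j" by simp
  finally show "mat_mult I X B i j - mat_mult I Y B i j = (X i j - Y i j) * B j j" .
qed

lemma gtm_mult:
  fixes A B X Y :: "'a::{linordered_ring_strict,ring_1} mat"
  assumes A: "A \<in> ut_mats I" and B: "B \<in> ut_mats I" and X: "X \<in> ut_mats I" and Y: "Y \<in> ut_mats I"
    and g: "gtm I X Y"
  shows "gtm I (mat_mult I (mat_mult I A X) B) (mat_mult I (mat_mult I A Y) B)"
proof -
  obtain i j where ij: "i \<in> I" "j \<in> I" "i \<le> j" and lt: "Y i j < X i j" and ag: "agb I X Y i (j - i)"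
    using g unfolding gtm_def by blast
  have AX: "mat_mult I A X \<in> ut_mats I" and AY: "mat_mult I A Y \<in> ut_mats I"
    using mm_closed A X Y by blast+
  note L = left_mult[OF A X Y ag ij]
  note R = right_mult[OF B AX AY L(1) ij]
  have "0 < X i j - Y i j" using lt by simp
  then have "0 < A i i * (X i j - Y i j)" using utpos[OF A ij(1)] by (simp add: mult_pos_pos)
  then have "0 < (A i i * (X i j - Y i j)) * B j j" using utpos[OF B ij(2)] by (simp add: mult_pos_pos)
  then have "0 < mat_mult I (mat_mult I A X) B i j - mat_mult I (mat_mult I A Y) B i j"
    using R(2) L(2) by simp
  then show ?thesis unfolding gtm_def using ij R(1) by auto
qed

lemma agb_sym: "agb I X Y i d = agb I Y X i d"
  unfolding agb_def by metis

lemma gtm_total: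
  fixes X Y :: "'a::{linordered_ring_strict,ring_1} mat"
  assumes X: "X \<in> ut_mats I" and Y: "Y \<in> ut_mats I" and ne: "X \<noteq> Y"
  shows "gtm I X Y \<or> gtm I Y X"
proof -
  define P where "P d i = (i \<in> I \<and> i + d \<in> I \<and> X i (i + d) \<noteq> Y i (i + d))" for d i
  have "\<exists>a b. X a b \<noteq> Y a b"
  proof (rule ccontr)
    assume "\<not> (\<exists>a b. X a b \<noteq> Y a b)"
    then have "X = Y" by (intro ext) blast
    then show False using ne by simp
  qed
  then obtain a b where "X a b \<noteq> Y a b" by blast
  then have "a \<in> I \<and> b \<in> I \<and> a \<le> b"
  proof (cases "X a b = 0")
    case True
    then show ?thesis using utNZ[OF Y, of a b] \<open>X a b \<noteq> Y a b\<close> by simp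
  next
    case False
    then show ?thesis using utNZ[OF X, of a b] by simp
  qed
  then have ab: "a \<in> I" "b \<in> I" "a \<le> b" by auto
  with \<open>X a b \<noteq> Y a b\<close> have "P (b - a) a" by (simp add: P_def)
  then have ex: "\<exists>d i. P d i" by blast
  define d0 where "d0 = (LEAST d. \<exists>i. P d i)"
  have "\<exists>i. P d0 i" unfolding d0_def using ex by (rule LeastI_ex)
  define i0 where "i0 = (LEAST i. P d0 i)"
  have P0: "P d0 i0" unfolding i0_def using \<open>\<exists>i. P d0 i\<close> by (rule LeastI_ex)
  have ag: "agb I X Y i0 d0" unfolding agb_def
  proof (intro allI impI)
    fix a b assume h: "a \<in> I" "b \<in> I" "a \<le> b" "b - a < d0 \<or> b - a = d0 \<and> a < i0"
    show "X a b = Y a b"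
    proof (rule ccontr)
      assume "X a b \<noteq> Y a b"
      then have "P (b - a) a" using h by (simp add: P_def)
      have n1: "\<not> (\<exists>i. P (b - a) i)" if "b - a < d0"
        using not_less_Least[of "b - a" "\<lambda>d. \<exists>i. P d i"] that unfolding d0_def by blast
      have n2: "\<not> P d0 a" if "a < i0"
        using not_less_Least[of a "P d0"] that unfolding i0_def by blast
      from h(4) show False
      proof
        assume "b - a < d0" then show False using n1 \<open>P (b - a) a\<close> by blast
      next
        assume "b - a = d0 \<and> a < i0" then show False using n2 \<open>P (b - a) a\<close> by simp
      qed
    qed
  qed
  have i0: "i0 \<in> I" "i0 + d0 \<in> I" and neq: "X i0 (i0 + d0) \<noteq> Y i0 (i0 + d0)" using P0 by (auto simp: P_def)
  have ag': "agb I X Y i0 (i0 + d0 - i0)" using ag by simp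
  show ?thesis
  proof (cases "Y i0 (i0 + d0) < X i0 (i0 + d0)")
    case True
    then show ?thesis unfolding gtm_def using i0 ag' by (intro disjI1 exI[of _ i0] exI[of _ "i0 + d0"]) auto
  next
    case False
    then have "X i0 (i0 + d0) < Y i0 (i0 + d0)" using neq by simp
    then show ?thesis unfolding gtm_def using i0 ag' agb_sym[of I X Y]
      by (intro disjI2 exI[of _ i0] exI[of _ "i0 + d0"]) auto
  qed
qed

lemma gtm_asym:
  fixes X Y :: "'a::{linordered_ring_strict,ring_1} mat"
  assumes "gtm I X Y" "gtm I Y X"
  shows False
proof -
  obtain i j where ij: "i \<in> I" "j \<in> I" "i \<le> j" and lt: "Y i j < X i j" and ag: "agb I X Y i (j - i)"
    using assms(1) unfolding gtm_def by blast
  obtain i' j' where ij': "i' \<in> I" "j' \<in> I" "i' \<le> j'" and lt': "X i' j' < Y i' j'" and ag': "agb I Y X i' (j' - i')"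
    using assms(2) unfolding gtm_def by blast
  consider "j - i < j' - i' \<or> (j - i = j' - i' \<and> i < i')" | "j' - i' < j - i \<or> (j' - i' = j - i \<and> i' < i)"
    | "i = i'" "j = j'" using ij ij' by linarith
  then show False
  proof cases
    case 1
    then have "Y i j = X i j" using agbD[OF ag' ij] by blast
    then show False using lt by simp
  next
    case 2
    then have "X i' j' = Y i' j'" using agbD[OF ag ij'] by blast
    then show False using lt' by simp
  next
    case 3
    then show False using lt lt' by simp
  qed
qed

lemma gtm_trans:
  fixes X Y Z :: "'a::{linordered_ring_strict,ring_1} mat"
  assumes "gtm I X Y" "gtm I Y Z"
  shows "gtm I X Z"
proof -
  obtain i j where ij: "i \<in> I" "j \<in> I" "i \<le> j" and lt: "Y i j < X i j" and ag: "agb I X Y i (j - i)"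
    using assms(1) unfolding gtm_def by blast
  obtain i' j' where ij': "i' \<in> I" "j' \<in> I" "i' \<le> j'" and lt': "Z i' j' < Y i' j'" and ag': "agb I Y Z i' (j' - i')"
    using assms(2) unfolding gtm_def by blast
  consider "j - i < j' - i' \<or> (j - i = j' - i' \<and> i < i')" | "j' - i' < j - i \<or> (j' - i' = j - i \<and> i' < i)"
    | "i = i'" "j = j'" using ij ij' by linarith
  then show ?thesis
  proof cases
    case 1
    then have "Y i j = Z i j" using agbD[OF ag' ij] by blast
    moreover have "agb I X Z i (j - i)" unfolding agb_def
    proof (intro allI impI)
      fix a b assume h: "a \<in> I" "b \<in> I" "a \<le> b" "b - a < j - i \<or> b - a = j - i \<and> a < i"
      have "X a b = Y a b" using agbD[OF ag h] .
      moreover have "Y a b = Z a b" using h 1 by (intro agbD[OF ag']) auto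
      ultimately show "X a b = Z a b" by simp
    qed
    ultimately show ?thesis unfolding gtm_def using ij lt by auto
  next
    case 2
    then have "X i' j' = Y i' j'" using agbD[OF ag ij'] by blast
    moreover have "agb I X Z i' (j' - i')" unfolding agb_def
    proof (intro allI impI)
      fix a b assume h: "a \<in> I" "b \<in> I" "a \<le> b" "b - a < j' - i' \<or> b - a = j' - i' \<and> a < i'"
      have "Y a b = Z a b" using agbD[OF ag' h] .
      moreover have "X a b = Y a b" using h 2 by (intro agbD[OF ag]) auto
      ultimately show "X a b = Z a b" by simp
    qed
    moreover have "Z i' j' < X i' j'" using lt' calculation by simp
    ultimately show ?thesis unfolding gtm_def using ij' by blast
  next
    case 3
    have "agb I X Z i (j - i)" using ag ag' 3 unfolding agb_def by metis
    then show ?thesis unfolding gtm_def using ij lt lt' 3 by (meson order.strict_trans)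
  qed
qed

theorem lemma2:
  fixes I :: "nat set" and n :: nat
  assumes "I = {1..n} \<or> I = {1..}"
  shows "group (ut_group I :: (nat \<Rightarrow> nat \<Rightarrow> 'a::{linordered_ring_strict,ring_1}) monoid)
         \<and> orderable_group (ut_group I :: (nat \<Rightarrow> nat \<Rightarrow> 'a) monoid)"
proof
  show "group (ut_group I :: (nat \<Rightarrow> nat \<Rightarrow> 'a::{linordered_ring_strict,ring_1}) monoid)"
  proof (rule groupI)
    fix x assume "x \<in> carrier (ut_group I :: 'a mat monoid)"
    then have x: "x \<in> ut_mats I" by (simp add: ut_group_def)
    show "\<exists>y\<in>carrier (ut_group I). y \<otimes>\<^bsub>ut_group I\<^esub> x = \<one>\<^bsub>ut_group I\<^esub>"
      using invm_closed[OF x] invm_inv[OF x] by (auto simp: ut_group_def)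
  qed (auto simp: ut_group_def mm_closed one_closed mm_assoc one_mult)
  show "orderable_group (ut_group I :: (nat \<Rightarrow> nat \<Rightarrow> 'a) monoid)"
    unfolding orderable_group_def
  proof (intro exI[of _ "gtm I"] conjI ballI impI)
    fix X Y assume "X \<in> carrier (ut_group I :: 'a mat monoid)" "Y \<in> carrier (ut_group I :: 'a mat monoid)"
    then have X: "X \<in> ut_mats I" and Y: "Y \<in> ut_mats I" by (auto simp: ut_group_def)
    show "gtm I X Y \<or> gtm I Y X \<or> X = Y" using gtm_total[OF X Y] by blast
    show "\<not> (gtm I X Y \<and> gtm I Y X)" using gtm_asym by blast
    show "\<not> (gtm I X Y \<and> X = Y)" using gtm_asym by blast
    show "\<not> (gtm I Y X \<and> X = Y)" using gtm_asym by blast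
  next
    fix X Y Z assume "gtm I X Y \<and> gtm I Y Z"
    then show "gtm I X Z" using gtm_trans by blast
  next
    fix A B X Y
    assume "A \<in> carrier (ut_group I :: 'a mat monoid)" "B \<in> carrier (ut_group I :: 'a mat monoid)"
      "X \<in> carrier (ut_group I :: 'a mat monoid)" "Y \<in> carrier (ut_group I :: 'a mat monoid)"
      and "gtm I X Y"
    then show "gtm I (A \<otimes>\<^bsub>ut_group I\<^esub> X \<otimes>\<^bsub>ut_group I\<^esub> B) (A \<otimes>\<^bsub>ut_group I\<^esub> Y \<otimes>\<^bsub>ut_group I\<^esub> B)"
      using gtm_mult by (simp add: ut_group_def)
  qed
qed

end
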